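(* Let $\mathcal{W}$ be an $(\ell-1)$-dimensional vector space over a field of prime characteristic $\ell \ge 5$, and let $A$ be a unipotent linear operator on $\mathcal{W}$ whose Jordan form consists of a single Jordan block of size $\ell-1$. If $r$ is an integer with $2 \le r \le \ell-3$, then $(\wedge^r(A)-1)^{\ell-1} \ne 0$.
   Context: $\wedge^r(A)$ denotes the operator on $\wedge^r(\mathcal{W})$ induced by $A$. *)

theory Defs
  imports "Jordan_Normal_Form.Jordan_Normal_Form" "Jordan_Normal_Form.DL_Submatrix"
begin

text \<open>W = 'a^n (column vectors, indices 0..<n). The r-th exterior power of W has basis
  e_S for S an r-element subset of {0..<n}; a vector of it is represented by its coordinate
  function on such subsets (zero elsewhere).\<close>

definition rsubsets :: "nat \<Rightarrow> nat \<Rightarrow> nat set set" where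
  "rsubsets n r = {S. S \<subseteq> {0..<n} \<and> card S = r}"

text \<open>The operator induced by A on the r-th exterior power: its matrix in the basis e_S
  is the r-th compound matrix, entry (S,T) = det of the submatrix A[S,T].\<close>

definition ext_pow_op :: "nat \<Rightarrow> 'a :: comm_ring_1 mat \<Rightarrow> (nat set \<Rightarrow> 'a) \<Rightarrow> (nat set \<Rightarrow> 'a)" where
  "ext_pow_op r A v = (\<lambda>S. if S \<in> rsubsets (dim_row A) r
      then (\<Sum>T\<in>rsubsets (dim_row A) r. det (submatrix A S T) * v T) else 0)"

definition ext_pow_op_minus_one :: "nat \<Rightarrow> 'a :: comm_ring_1 mat \<Rightarrow> (nat set \<Rightarrow> 'a) \<Rightarrow> (nat set \<Rightarrow> 'a)" where
  "ext_pow_op_minus_one r A v = (\<lambda>S. ext_pow_op r A v S - (if S \<in> rsubsets (dim_row A) r then v S else 0))"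

end

theory Submission
  imports Defs "HOL-Computational_Algebra.Primes"
begin

lemma rsubsetsD:
  assumes "S \<in> rsubsets n r"
  shows "finite S" "card S = r" "S \<subseteq> {0..<n}"
  using assms unfolding rsubsets_def by (auto intro: finite_subset)

lemma rs_pick_in: "S \<in> rsubsets n r \<Longrightarrow> a < r \<Longrightarrow> pick S a \<in> S"
  using rsubsetsD(2) pick_in_set by metis

lemma rs_pick_lt: "S \<in> rsubsets n r \<Longrightarrow> a < r \<Longrightarrow> pick S a < n"
  using rs_pick_in rsubsetsD(3) by fastforce

lemma rs_pick_mono: "S \<in> rsubsets n r \<Longrightarrow> a < b \<Longrightarrow> b < r \<Longrightarrow> pick S a < pick S b"
  using rsubsetsD(2) pick_mono by metis

lemma rs_pick_mono_le: "S \<in> rsubsets n r \<Longrightarrow> a \<le> b \<Longrightarrow> b < r \<Longrightarrow> pick S a \<le> pick S b"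
  using rs_pick_mono by (metis le_less)

lemma rs_pick_inj: "S \<in> rsubsets n r \<Longrightarrow> inj_on (pick S) {0..<r}"
  by (rule inj_onI) (metis atLeastLessThan_iff linorder_cases rs_pick_mono less_irrefl)

lemma rs_pick_image: assumes "S \<in> rsubsets n r" shows "pick S ` {0..<r} = S"
proof -
  have sub: "pick S ` {0..<r} \<subseteq> S" using rs_pick_in[OF assms] by auto
  have "card (pick S ` {0..<r}) = r" using card_image[OF rs_pick_inj[OF assms]] by simp
  then show ?thesis using card_subset_eq[OF rsubsetsD(1)[OF assms] sub] rsubsetsD(2)[OF assms] by simp
qed

lemma rs_eqI: assumes "U \<in> rsubsets n r" "V \<in> rsubsets n r" "\<And>a. a < r \<Longrightarrow> pick U a = pick V a"
  shows "U = V"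
proof -
  have "pick U ` {0..<r} = pick V ` {0..<r}" using assms(3) by (intro image_cong) auto
  then show ?thesis using rs_pick_image assms(1,2) by metis
qed

lemma pick_strict_image:
  assumes g: "\<And>a b. a < b \<Longrightarrow> b < r \<Longrightarrow> g a < (g b :: nat)" and a: "a < r"
  shows "pick (g ` {0..<r}) a = g a"
proof -
  have inj: "inj_on g {0..<r}"
    by (rule inj_onI) (metis atLeastLessThan_iff linorder_cases g less_irrefl)
  have "{x \<in> g ` {0..<r}. x < g a} = g ` {0..<a}"
  proof (intro equalityI subsetI)
    fix x assume "x \<in> {x \<in> g ` {0..<r}. x < g a}"
    then obtain b where b: "b < r" "x = g b" "g b < g a" by auto
    have "b < a" proof (rule ccontr)
      assume "\<not> b < a" then have "a \<le> b" by simp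
      then have "g a \<le> g b" using g b(1) by (metis le_less)
      then show False using b by simp
    qed
    then show "x \<in> g ` {0..<a}" using b by auto
  next
    fix x assume "x \<in> g ` {0..<a}"
    then obtain b where "b < a" "x = g b" by auto
    then show "x \<in> {x \<in> g ` {0..<r}. x < g a}" using g a by auto
  qed
  moreover have "card (g ` {0..<a}) = a"
  proof -
    have "inj_on g {0..<a}" using inj_on_subset[OF inj] a by auto
    then show ?thesis by (simp add: card_image)
  qed
  ultimately have "card {x \<in> g ` {0..<r}. x < g a} = a" by simp
  then show ?thesis using pick_card_in_set[of "g a" "g ` {0..<r}"] a by auto
qed

lemma submatrix_rs:
  assumes X: "X \<in> carrier_mat n n" and U: "U \<in> rsubsets n r" and V: "V \<in> rsubsets n r"
  shows "submatrix X U V = mat r r (\<lambda>(i,j). X $$ (pick U i, pick V j))"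
proof -
  have "{i. i < dim_row X \<and> i \<in> U} = U" "{i. i < dim_col X \<and> i \<in> V} = V"
    using X rsubsetsD(3)[OF U] rsubsetsD(3)[OF V] by auto
  then show ?thesis unfolding submatrix_def using rsubsetsD(2)[OF U] rsubsetsD(2)[OF V] by simp
qed

lemma det_bidiag:
  fixes X :: "'a::comm_ring_1 mat"
  assumes X: "X \<in> carrier_mat n n"
    and bd: "\<And>x y. x < n \<Longrightarrow> y < n \<Longrightarrow> X $$ (x,y) \<noteq> 0 \<Longrightarrow> x \<le> y \<and> y \<le> Suc x"
    and U: "U \<in> rsubsets n r" and V: "V \<in> rsubsets n r"
  shows "det (submatrix X U V) = (\<Prod>a<r. X $$ (pick U a, pick V a))"
proof -
  let ?M = "mat r r (\<lambda>(i,j). X $$ (pick U i, pick V j))"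
  have M: "?M \<in> carrier_mat r r" by simp
  have key: "(\<Prod>i\<in>{0..<r}. ?M $$ (i, \<sigma> i)) = 0" if \<sigma>: "\<sigma> permutes {0..<r}" "\<sigma> \<noteq> id" for \<sigma>
  proof (rule ccontr)
    assume nz: "(\<Prod>i\<in>{0..<r}. ?M $$ (i, \<sigma> i)) \<noteq> 0"
    have sr: "\<And>i. i < r \<Longrightarrow> \<sigma> i < r" using permutes_in_image[OF \<sigma>(1)] by auto
    have nzi: "X $$ (pick U i, pick V (\<sigma> i)) \<noteq> 0" if "i < r" for i
    proof -
      have "?M $$ (i, \<sigma> i) \<noteq> 0"
      proof
        assume "?M $$ (i, \<sigma> i) = 0"
        then have "(\<Prod>i\<in>{0..<r}. ?M $$ (i, \<sigma> i)) = 0" using that by (intro prod_zero) auto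
        then show False using nz by simp
      qed
      then show ?thesis using that sr by simp
    qed
    have bdi: "pick U i \<le> pick V (\<sigma> i) \<and> pick V (\<sigma> i) \<le> Suc (pick U i)" if "i < r" for i
      using bd[OF rs_pick_lt[OF U that] rs_pick_lt[OF V sr[OF that]] nzi[OF that]] .
    have fix_all: "\<forall>a. a < r \<longrightarrow> \<sigma> a = a"
    proof (intro allI)
      fix a show "a < r \<longrightarrow> \<sigma> a = a"
      proof (induction a rule: less_induct)
        case (less a)
        show ?case
        proof
          assume ar: "a < r"
          show "\<sigma> a = a"
          proof (rule ccontr)
            assume ne: "\<sigma> a \<noteq> a"
            have inj: "inj \<sigma>" using \<sigma>(1) permutes_inj by blast
            have ge: "a < \<sigma> a"
            proof (rule ccontr)
              assume "\<not> a < \<sigma> a"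
              then have "\<sigma> a < a" using ne by simp
              then have "\<sigma> (\<sigma> a) = \<sigma> a" using less.IH ar by auto
              then have "\<sigma> a = a" using inj by (simp add: inj_eq)
              then show False using ne by simp
            qed
            obtain a' where a': "\<sigma> a' = a" using \<sigma>(1) unfolding permutes_def by metis
            have a'r: "a' < r"
            proof (rule ccontr)
              assume "\<not> a' < r"
              then have "\<sigma> a' = a'" using \<sigma>(1) unfolding permutes_def by auto
              then show False using a' ar \<open>\<not> a' < r\<close> by simp
            qed
            have "a' \<noteq> a" using a' ne by auto
            moreover have "\<not> a' < a"
            proof
              assume "a' < a" then have "\<sigma> a' = a'" using less.IH ar by auto
              then show False using a' \<open>a' < a\<close> by simp
            qed
            ultimately have aa': "a < a'" by simp
            have 1: "pick V (\<sigma> a) \<le> Suc (pick U a)" using bdi[OF ar] by simp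
            have 2: "pick U a' \<le> pick V a" using bdi[OF a'r] a' by simp
            have 3: "pick U a < pick U a'" using rs_pick_mono[OF U aa' a'r] .
            have 4: "pick V a < pick V (\<sigma> a)" using rs_pick_mono[OF V ge sr[OF ar]] .
            show False using 1 2 3 4 by simp
          qed
        qed
      qed
    qed
    have "\<sigma> = id"
    proof
      fix x show "\<sigma> x = id x"
        using fix_all \<sigma>(1) unfolding permutes_def by (cases "x < r") auto
    qed
    then show False using \<sigma>(2) by simp
  qed
  have "det ?M = (\<Sum>\<sigma>\<in>{\<sigma>. \<sigma> permutes {0..<r}}. signof \<sigma> * (\<Prod>i\<in>{0..<r}. ?M $$ (i, \<sigma> i)))"
    using det_def'[OF M] by simp
  also have "\<dots> = signof id * (\<Prod>i\<in>{0..<r}. ?M $$ (i, id i))"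
  proof (subst sum.remove[of _ id])
    show "finite {\<sigma>. \<sigma> permutes {0..<r}}" by (simp add: finite_permutations)
    show "id \<in> {\<sigma>. \<sigma> permutes {0..<r}}" by (simp add: permutes_id)
    show "signof id * (\<Prod>i = 0..<r. ?M $$ (i, id i)) +
      (\<Sum>\<sigma>\<in>{\<sigma>. \<sigma> permutes {0..<r}} - {id}. signof \<sigma> * (\<Prod>i = 0..<r. ?M $$ (i, \<sigma> i))) =
      signof id * (\<Prod>i = 0..<r. ?M $$ (i, id i))"
      using key by (subst sum.neutral) auto
  qed
  also have "\<dots> = (\<Prod>a<r. X $$ (pick U a, pick V a))"
    by (simp add: atLeast0LessThan)
  finally show ?thesis using submatrix_rs[OF X U V] by simp
qed

lemma cauchy_binet_rect:
  fixes X Y :: "'a::comm_ring_1 mat"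
  assumes X: "X \<in> carrier_mat r n" and Y: "Y \<in> carrier_mat n r"
  shows "det (X * Y) = (\<Sum>W\<in>rsubsets n r. det (mat r r (\<lambda>(i,j). X $$ (i, pick W j))) *
                                         det (mat r r (\<lambda>(i,j). Y $$ (pick W i, j))))"
proof -
  let ?U = "{0..<r}"
  let ?F = "{f. (\<forall>i\<in>?U. f i \<in> {0..<n}) \<and> (\<forall>i. i \<notin> ?U \<longrightarrow> f i = i)}"
  let ?g = "\<lambda>f. det (mat\<^sub>r r r (\<lambda>i. X $$ (i, f i) \<cdot>\<^sub>v row Y (f i)))"
  let ?Fi = "{f \<in> ?F. inj_on f ?U}"
  let ?P = "{\<sigma>. \<sigma> permutes ?U}"
  let ?R = "rsubsets n r"
  define h where "h = (\<lambda>(W, \<sigma>::nat\<Rightarrow>nat). (\<lambda>i. if i < r then pick W (\<sigma> i) else i))"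
  define k where "k = (\<lambda>f::nat\<Rightarrow>nat. (f ` ?U, (\<lambda>i. if i < r then inv_into ?U (pick (f ` ?U)) (f i) else i)))"
  have finF: "finite ?F" by (rule finite_bounded_functions) auto
  have 1: "det (X * Y) = sum ?g ?F"
    unfolding mat_mul_finsum_alt[OF X Y]
    by (rule det_linear_rows_sum) (insert X Y, auto)
  have g_eq: "?g f = (\<Prod>i\<in>?U. X $$ (i, f i)) * det (mat\<^sub>r r r (\<lambda>i. row Y (f i)))" for f
    by (rule det_rows_mul) (insert Y, auto)
  have zero: "?g f = 0" if f: "f \<in> ?F" "\<not> inj_on f ?U" for f
  proof -
    obtain i j where ij: "i \<in> ?U" "j \<in> ?U" "f i = f j" "i \<noteq> j" using f(2) unfolding inj_on_def by auto
    have "det (mat\<^sub>r r r (\<lambda>i. row Y (f i))) = 0"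
      by (rule det_identical_rows[of _ r i j]) (insert ij, auto)
    then show ?thesis unfolding g_eq by simp
  qed
  have 2: "sum ?g ?F = sum ?g ?Fi"
    by (rule sum.mono_neutral_right[OF finF]) (use zero in auto)
  have Wfi: "f ` ?U \<in> ?R" if "f \<in> ?Fi" for f
  proof -
    have "card (f ` ?U) = r" using that card_image by fastforce
    then show ?thesis using that unfolding rsubsets_def by auto
  qed
  have hF: "h (W, \<sigma>) \<in> ?Fi" if W: "W \<in> ?R" and \<sigma>: "\<sigma> permutes ?U" for W \<sigma>
  proof -
    have sr: "\<And>i. i < r \<Longrightarrow> \<sigma> i < r" using permutes_in_image[OF \<sigma>] by auto
    have "inj_on (h (W, \<sigma>)) ?U"
    proof (rule inj_onI)
      fix i j assume ij: "i \<in> ?U" "j \<in> ?U" "h (W, \<sigma>) i = h (W, \<sigma>) j"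
      then have "pick W (\<sigma> i) = pick W (\<sigma> j)" unfolding h_def by auto
      then have "\<sigma> i = \<sigma> j" using rs_pick_inj[OF W] sr ij(1,2) unfolding inj_on_def by auto
      then show "i = j" using permutes_inj[OF \<sigma>] unfolding inj_def by auto
    qed
    then show ?thesis unfolding h_def using rs_pick_lt[OF W] sr by auto
  qed
  have hk: "h (k f) = f" if f: "f \<in> ?Fi" for f
  proof
    fix i show "h (k f) i = f i"
    proof (cases "i < r")
      case True
      have W: "f ` ?U \<in> ?R" using Wfi[OF f] .
      have "f i \<in> pick (f ` ?U) ` ?U" using rs_pick_image[OF W] True by auto
      then have "pick (f ` ?U) (inv_into ?U (pick (f ` ?U)) (f i)) = f i" by (rule f_inv_into_f)
      then show ?thesis unfolding h_def k_def using True by simp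
    next
      case False then show ?thesis unfolding h_def k_def using f by auto
    qed
  qed
  have kS: "k f \<in> Sigma ?R (\<lambda>_. ?P)" if f: "f \<in> ?Fi" for f
  proof -
    have W: "f ` ?U \<in> ?R" using Wfi[OF f] .
    let ?s = "\<lambda>i. if i < r then inv_into ?U (pick (f ` ?U)) (f i) else i"
    have sub: "?s ` ?U \<subseteq> ?U"
    proof
      fix y assume "y \<in> ?s ` ?U"
      then obtain i where i: "i < r" "y = ?s i" by auto
      have "f i \<in> pick (f ` ?U) ` ?U" using rs_pick_image[OF W] i by auto
      then show "y \<in> ?U" using i inv_into_into by (metis (no_types, lifting))
    qed
    have inj: "inj_on ?s ?U"
    proof (rule inj_onI)
      fix i j assume ij: "i \<in> ?U" "j \<in> ?U" "?s i = ?s j"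
      have "f i \<in> pick (f ` ?U) ` ?U" "f j \<in> pick (f ` ?U) ` ?U" using rs_pick_image[OF W] ij by auto
      then have "f i = f j" using ij f_inv_into_f by (metis atLeastLessThan_iff)
      then show "i = j" using f ij unfolding inj_on_def by auto
    qed
    have "bij_betw ?s ?U ?U" unfolding bij_betw_def using inj endo_inj_surj[OF _ sub inj] by auto
    then have "?s permutes ?U" by (rule bij_imp_permutes) auto
    then show ?thesis unfolding k_def using W by auto
  qed
  have kh: "k (h (W, \<sigma>)) = (W, \<sigma>)" if W: "W \<in> ?R" and \<sigma>: "\<sigma> permutes ?U" for W \<sigma>
  proof -
    have sr: "\<And>i. i < r \<Longrightarrow> \<sigma> i < r" using permutes_in_image[OF \<sigma>] by auto
    have img: "h (W, \<sigma>) ` ?U = W"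
    proof -
      have "h (W, \<sigma>) ` ?U = pick W ` (\<sigma> ` ?U)" unfolding h_def by (auto simp: image_image)
      also have "\<sigma> ` ?U = ?U" using permutes_image[OF \<sigma>] .
      finally show ?thesis using rs_pick_image[OF W] by simp
    qed
    have "(\<lambda>i. if i < r then inv_into ?U (pick W) (h (W, \<sigma>) i) else i) = \<sigma>"
    proof
      fix i show "(if i < r then inv_into ?U (pick W) (h (W, \<sigma>) i) else i) = \<sigma> i"
      proof (cases "i < r")
        case True
        then show ?thesis unfolding h_def using inv_into_f_f[OF rs_pick_inj[OF W]] sr by auto
      next
        case False then show ?thesis using \<sigma> unfolding permutes_def by auto
      qed
    qed
    then show ?thesis unfolding k_def img by simp
  qed
  have 3: "sum ?g ?Fi = (\<Sum>p\<in>Sigma ?R (\<lambda>_. ?P). ?g (h p))"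
    by (rule sum.reindex_bij_witness[of _ h k]) (use hk kS kh hF in auto)
  have 4: "(\<Sum>p\<in>Sigma ?R (\<lambda>_. ?P). ?g (h p)) = (\<Sum>W\<in>?R. \<Sum>\<sigma>\<in>?P. ?g (h (W, \<sigma>)))"
    unfolding sum.cartesian_product by (rule sum.cong) auto
  have 5: "(\<Sum>\<sigma>\<in>?P. ?g (h (W, \<sigma>))) = det (mat r r (\<lambda>(i,j). X $$ (i, pick W j))) *
                                         det (mat r r (\<lambda>(i,j). Y $$ (pick W i, j)))"
    if W: "W \<in> ?R" for W
  proof -
    let ?XW = "mat r r (\<lambda>(i,j). X $$ (i, pick W j))"
    let ?YW = "mat r r (\<lambda>(i,j). Y $$ (pick W i, j))"
    have YW: "?YW \<in> carrier_mat r r" by simp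
    have t: "?g (h (W, \<sigma>)) = signof \<sigma> * (\<Prod>i\<in>?U. X $$ (i, pick W (\<sigma> i))) * det ?YW"
      if \<sigma>: "\<sigma> permutes ?U" for \<sigma>
    proof -
      have sr: "\<And>i. i < r \<Longrightarrow> \<sigma> i < r" using permutes_in_image[OF \<sigma>] by auto
      have p1: "(\<Prod>i\<in>?U. X $$ (i, h (W, \<sigma>) i)) = (\<Prod>i\<in>?U. X $$ (i, pick W (\<sigma> i)))"
        unfolding h_def by (rule prod.cong) auto
      have m: "mat\<^sub>r r r (\<lambda>i. row Y (h (W, \<sigma>) i)) = mat r r (\<lambda>(i,j). ?YW $$ (\<sigma> i, j))"
        by (rule eq_matI) (insert Y sr rs_pick_lt[OF W], auto simp: h_def)
      have "det (mat\<^sub>r r r (\<lambda>i. row Y (h (W, \<sigma>) i))) = signof \<sigma> * det ?YW"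
        unfolding m by (rule det_permute_rows[OF YW \<sigma>])
      then show ?thesis unfolding g_eq p1 by (simp add: ac_simps)
    qed
    have "(\<Sum>\<sigma>\<in>?P. ?g (h (W, \<sigma>))) = (\<Sum>\<sigma>\<in>?P. signof \<sigma> * (\<Prod>i\<in>?U. X $$ (i, pick W (\<sigma> i)))) * det ?YW"
      unfolding sum_distrib_right using t by (intro sum.cong) auto
    also have "(\<Sum>\<sigma>\<in>?P. signof \<sigma> * (\<Prod>i\<in>?U. X $$ (i, pick W (\<sigma> i)))) = det ?XW"
    proof -
      have "det ?XW = (\<Sum>\<sigma>\<in>?P. signof \<sigma> * (\<Prod>i\<in>?U. ?XW $$ (i, \<sigma> i)))"
        using det_def'[of ?XW r] by simp
      also have "\<dots> = (\<Sum>\<sigma>\<in>?P. signof \<sigma> * (\<Prod>i\<in>?U. X $$ (i, pick W (\<sigma> i))))"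
      proof (rule sum.cong[OF refl])
        fix \<sigma> assume "\<sigma> \<in> ?P"
        then have sr: "\<And>i. i < r \<Longrightarrow> \<sigma> i < r" using permutes_in_image by auto
        show "signof \<sigma> * (\<Prod>i\<in>?U. ?XW $$ (i, \<sigma> i)) = signof \<sigma> * (\<Prod>i\<in>?U. X $$ (i, pick W (\<sigma> i)))"
          by (intro arg_cong[where f="\<lambda>x. signof \<sigma> * x"] prod.cong) (use sr in auto)
      qed
      finally show ?thesis by simp
    qed
    finally show ?thesis .
  qed
  show ?thesis unfolding 1 2 3 4 using 5 by (intro sum.cong) auto
qed

lemma cauchy_binet:
  fixes X Y :: "'a::comm_ring_1 mat"
  assumes X: "X \<in> carrier_mat n n" and Y: "Y \<in> carrier_mat n n"
    and U: "U \<in> rsubsets n r" and V: "V \<in> rsubsets n r"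
  shows "det (submatrix (X * Y) U V) =
     (\<Sum>W\<in>rsubsets n r. det (submatrix X U W) * det (submatrix Y W V))"
proof -
  let ?X' = "mat r n (\<lambda>(i,j). X $$ (pick U i, j))"
  let ?Y' = "mat n r (\<lambda>(i,j). Y $$ (i, pick V j))"
  have XY: "X * Y \<in> carrier_mat n n" using X Y by simp
  have "submatrix (X * Y) U V = ?X' * ?Y'"
    unfolding submatrix_rs[OF XY U V]
    by (rule eq_matI) (insert X Y rs_pick_lt[OF U] rs_pick_lt[OF V],
        auto simp: scalar_prod_def intro!: sum.cong)
  then have "det (submatrix (X * Y) U V) = det (?X' * ?Y')" by simp
  also have "\<dots> = (\<Sum>W\<in>rsubsets n r. det (mat r r (\<lambda>(i,j). ?X' $$ (i, pick W j))) *
                                         det (mat r r (\<lambda>(i,j). ?Y' $$ (pick W i, j))))"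
    by (rule cauchy_binet_rect) auto
  also have "\<dots> = (\<Sum>W\<in>rsubsets n r. det (submatrix X U W) * det (submatrix Y W V))"
  proof (rule sum.cong[OF refl])
    fix W assume W: "W \<in> rsubsets n r"
    have a: "mat r r (\<lambda>(i,j). ?X' $$ (i, pick W j)) = submatrix X U W"
      unfolding submatrix_rs[OF X U W] by (rule eq_matI) (insert rs_pick_lt[OF W], auto)
    have b: "mat r r (\<lambda>(i,j). ?Y' $$ (pick W i, j)) = submatrix Y W V"
      unfolding submatrix_rs[OF Y W V] by (rule eq_matI) (insert rs_pick_lt[OF W], auto)
    show "det (mat r r (\<lambda>(i,j). ?X' $$ (i, pick W j))) * det (mat r r (\<lambda>(i,j). ?Y' $$ (pick W i, j))) =
          det (submatrix X U W) * det (submatrix Y W V)" unfolding a b ..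
  qed
  finally show ?thesis .
qed

lemma finite_rsubsets: "finite (rsubsets n r)"
  unfolding rsubsets_def by (rule finite_subset[of _ "Pow {0..<n}"]) auto

lemma ext_pow_op_mult:
  fixes X Y :: "'a::comm_ring_1 mat"
  assumes X: "X \<in> carrier_mat n n" and Y: "Y \<in> carrier_mat n n"
  shows "ext_pow_op r (X * Y) v = ext_pow_op r X (ext_pow_op r Y v)"
proof
  fix S
  have dX: "dim_row X = n" and dXY: "dim_row (X * Y) = n" and dY: "dim_row Y = n" using X Y by auto
  show "ext_pow_op r (X * Y) v S = ext_pow_op r X (ext_pow_op r Y v) S"
  proof (cases "S \<in> rsubsets n r")
    case True
    have "ext_pow_op r (X * Y) v S = (\<Sum>T\<in>rsubsets n r. det (submatrix (X * Y) S T) * v T)"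
      unfolding ext_pow_op_def dXY using True by simp
    also have "\<dots> = (\<Sum>T\<in>rsubsets n r. \<Sum>W\<in>rsubsets n r. det (submatrix X S W) * (det (submatrix Y W T) * v T))"
      by (rule sum.cong[OF refl]) (simp add: cauchy_binet[OF X Y True] sum_distrib_right mult.assoc)
    also have "\<dots> = (\<Sum>W\<in>rsubsets n r. \<Sum>T\<in>rsubsets n r. det (submatrix X S W) * (det (submatrix Y W T) * v T))"
      by (rule sum.swap)
    also have "\<dots> = (\<Sum>W\<in>rsubsets n r. det (submatrix X S W) * ext_pow_op r Y v W)"
      by (rule sum.cong[OF refl]) (simp add: ext_pow_op_def dY sum_distrib_left)
    also have "\<dots> = ext_pow_op r X (ext_pow_op r Y v) S"
      unfolding ext_pow_op_def[of r X] dX using True by simp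
    finally show ?thesis .
  next
    case False
    then show ?thesis unfolding ext_pow_op_def dX dXY by simp
  qed
qed

lemma prod_indicator_nat:
  "(\<Prod>a<(r::nat). (if c a then 1 else 0 :: 'a::comm_semiring_1)) = (if \<forall>a<r. c a then 1 else 0)"
  by (induction r) (auto simp: less_Suc_eq)

lemma ext_pow_op_one:
  "ext_pow_op r (1\<^sub>m n :: 'a::comm_ring_1 mat) v S = (if S \<in> rsubsets n r then v S else 0)"
proof (cases "S \<in> rsubsets n r")
  case True
  have d: "det (submatrix (1\<^sub>m n :: 'a mat) S T) = (if S = T then 1 else 0)" if T: "T \<in> rsubsets n r" for T
  proof -
    have "det (submatrix (1\<^sub>m n :: 'a mat) S T) = (\<Prod>a<r. (1\<^sub>m n :: 'a mat) $$ (pick S a, pick T a))"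
      by (rule det_bidiag[OF one_carrier_mat _ True T]) (auto split: if_splits)
    also have "\<dots> = (\<Prod>a<r. (if pick S a = pick T a then 1 else 0))"
      by (rule prod.cong[OF refl]) (use rs_pick_lt[OF True] rs_pick_lt[OF T] in auto)
    also have "\<dots> = (if S = T then 1 else 0)"
      unfolding prod_indicator_nat using rs_eqI[OF True T] by auto
    finally show ?thesis .
  qed
  have "ext_pow_op r (1\<^sub>m n :: 'a mat) v S = (\<Sum>T\<in>rsubsets n r. (if S = T then 1 else 0) * v T)"
    unfolding ext_pow_op_def using True d by simp
  also have "\<dots> = (\<Sum>T\<in>rsubsets n r. if S = T then v T else 0)" by (rule sum.cong) auto
  also have "\<dots> = v S" using True finite_rsubsets by (simp add: sum.delta)
  finally show ?thesis using True by simp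
next
  case False then show ?thesis unfolding ext_pow_op_def by simp
qed

definition supp :: "nat \<Rightarrow> nat \<Rightarrow> (nat set \<Rightarrow> 'a::zero) \<Rightarrow> bool" where
  "supp n r v \<longleftrightarrow> (\<forall>S. S \<notin> rsubsets n r \<longrightarrow> v S = 0)"

lemma supp_ext: "dim_row X = n \<Longrightarrow> supp n r (ext_pow_op r X v)"
  unfolding supp_def ext_pow_op_def by auto

lemma supp_extm: "dim_row X = n \<Longrightarrow> supp n r (ext_pow_op_minus_one r X v)"
  unfolding supp_def ext_pow_op_minus_one_def ext_pow_op_def by auto

lemma ext_pow_op_zero: "ext_pow_op r X (\<lambda>_. 0) = (\<lambda>_. 0)"
  unfolding ext_pow_op_def by auto

lemma ext_pow_op_diff: "ext_pow_op r X (\<lambda>S. f S - g S) = (\<lambda>S. ext_pow_op r X f S - ext_pow_op r X g S)"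
  unfolding ext_pow_op_def by (auto simp: sum_subtractf right_diff_distrib)

lemma transfer_step:
  fixes P Q J :: "'a::comm_ring_1 mat"
  assumes P: "P \<in> carrier_mat n n" and Q: "Q \<in> carrier_mat n n" and J: "J \<in> carrier_mat n n"
    and PQ: "P * Q = 1\<^sub>m n" and QP: "Q * P = 1\<^sub>m n"
    and x: "supp n r x"
  shows "ext_pow_op_minus_one r (P * J * Q) (ext_pow_op r P x) = ext_pow_op r P (ext_pow_op_minus_one r J x)"
proof -
  have dA: "dim_row (P * J * Q) = n" and dJ: "dim_row J = n" using P J by auto
  have QPx: "ext_pow_op r Q (ext_pow_op r P x) = x"
  proof
    fix S
    have "ext_pow_op r Q (ext_pow_op r P x) S = ext_pow_op r (Q * P) x S"
      using ext_pow_op_mult[OF Q P] by simp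
    also have "\<dots> = x S" unfolding QP ext_pow_op_one using x unfolding supp_def by auto
    finally show "ext_pow_op r Q (ext_pow_op r P x) S = x S" .
  qed
  have "ext_pow_op r (P * J * Q) (ext_pow_op r P x) = ext_pow_op r P (ext_pow_op r J (ext_pow_op r Q (ext_pow_op r P x)))"
    using ext_pow_op_mult[of "P * J" n Q] ext_pow_op_mult[OF P J] P J Q by simp
  also have "\<dots> = ext_pow_op r P (ext_pow_op r J x)" unfolding QPx ..
  finally have 1: "ext_pow_op r (P * J * Q) (ext_pow_op r P x) = ext_pow_op r P (ext_pow_op r J x)" .
  have 2: "(\<lambda>S. if S \<in> rsubsets n r then ext_pow_op r P x S else 0) = ext_pow_op r P x"
    using supp_ext[of P n r x] P unfolding supp_def by auto
  have 3: "(\<lambda>S. if S \<in> rsubsets n r then x S else 0) = x" using x unfolding supp_def by auto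
  have "ext_pow_op_minus_one r (P * J * Q) (ext_pow_op r P x) =
        (\<lambda>S. ext_pow_op r P (ext_pow_op r J x) S - ext_pow_op r P x S)"
    unfolding ext_pow_op_minus_one_def dA 1 using 2 by metis
  also have "\<dots> = ext_pow_op r P (ext_pow_op_minus_one r J x)"
    unfolding ext_pow_op_minus_one_def dJ 3 ext_pow_op_diff ..
  finally show ?thesis .
qed

lemma transfer_pow:
  fixes P Q J :: "'a::comm_ring_1 mat"
  assumes P: "P \<in> carrier_mat n n" and Q: "Q \<in> carrier_mat n n" and J: "J \<in> carrier_mat n n"
    and PQ: "P * Q = 1\<^sub>m n" and QP: "Q * P = 1\<^sub>m n"
    and x: "supp n r x"
  shows "(ext_pow_op_minus_one r (P * J * Q) ^^ j) (ext_pow_op r P x) = ext_pow_op r P ((ext_pow_op_minus_one r J ^^ j) x)"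
proof (induction j)
  case 0 then show ?case by simp
next
  case (Suc j)
  have s: "supp n r ((ext_pow_op_minus_one r J ^^ j) x)"
  proof (cases j)
    case 0 then show ?thesis using x by simp
  next
    case (Suc i) then show ?thesis using supp_extm[of J n r] J by simp
  qed
  show ?case using transfer_step[OF P Q J PQ QP s] Suc.IH by simp
qed

definition cov :: "nat \<Rightarrow> nat set \<Rightarrow> nat set \<Rightarrow> bool" where
  "cov r U V \<longleftrightarrow> U \<noteq> V \<and> (\<forall>a<r. pick U a \<le> pick V a \<and> pick V a \<le> Suc (pick U a))"

lemma MJ_eq:
  assumes U: "U \<in> rsubsets n r"
  shows "ext_pow_op_minus_one r (jordan_block n (1::'a::comm_ring_1)) v U = (\<Sum>V\<in>{V\<in>rsubsets n r. cov r U V}. v V)"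
proof -
  let ?J = "jordan_block n (1::'a)"
  let ?R = "rsubsets n r"
  have J: "?J \<in> carrier_mat n n" by (simp add: jordan_block_def)
  let ?bd = "\<lambda>V. \<forall>a<r. pick U a \<le> pick V a \<and> pick V a \<le> Suc (pick U a)"
  have d: "det (submatrix ?J U V) = (if ?bd V then 1 else 0)" if V: "V \<in> ?R" for V
  proof -
    have "det (submatrix ?J U V) = (\<Prod>a<r. ?J $$ (pick U a, pick V a))"
      by (rule det_bidiag[OF J _ U V]) (auto simp: jordan_block_def split: if_splits)
    also have "\<dots> = (\<Prod>a<r. if pick U a \<le> pick V a \<and> pick V a \<le> Suc (pick U a) then 1 else 0)"
    proof (rule prod.cong[OF refl])
      fix a assume "a \<in> {..<r}"
      then have "pick U a < n" "pick V a < n" using rs_pick_lt[OF U] rs_pick_lt[OF V] by auto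
      then show "?J $$ (pick U a, pick V a) = (if pick U a \<le> pick V a \<and> pick V a \<le> Suc (pick U a) then 1 else 0)"
        by (auto simp: jordan_block_def)
    qed
    also have "\<dots> = (if ?bd V then 1 else 0)" by (rule prod_indicator_nat)
    finally show ?thesis .
  qed
  have fin: "finite ?R" by (rule finite_rsubsets)
  have "ext_pow_op_minus_one r ?J v U = (\<Sum>V\<in>?R. det (submatrix ?J U V) * v V) - v U"
    unfolding ext_pow_op_minus_one_def ext_pow_op_def using U by simp
  also have "(\<Sum>V\<in>?R. det (submatrix ?J U V) * v V) = (\<Sum>V\<in>?R. if ?bd V then v V else 0)"
  proof (rule sum.cong[OF refl])
    fix V assume V: "V \<in> ?R"
    show "det (submatrix ?J U V) * v V = (if ?bd V then v V else 0)"
    proof -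
      have g: "\<And>c (x::'a). (if c then 1 else 0) * x = (if c then x else 0)" by simp
      show ?thesis unfolding d[OF V] by (rule g)
    qed
  qed
  also have "\<dots> = (\<Sum>V\<in>{V\<in>?R. ?bd V}. v V)" by (rule sum.inter_filter[OF fin, symmetric])
  also have "\<dots> = v U + (\<Sum>V\<in>{V\<in>?R. ?bd V} - {U}. v V)"
    by (rule sum.remove) (use fin U in auto)
  also have "{V\<in>?R. ?bd V} - {U} = {V\<in>?R. cov r U V}" unfolding cov_def by auto
  finally show ?thesis by simp
qed

definition wt :: "nat \<Rightarrow> nat set \<Rightarrow> nat" where "wt r U = (\<Sum>a<r. pick U a)"

lemma cov_wt:
  assumes U: "U \<in> rsubsets n r" and V: "V \<in> rsubsets n r" and c: "cov r U V"
  shows "wt r U < wt r V"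
proof -
  have "\<exists>a<r. pick U a \<noteq> pick V a"
  proof (rule ccontr)
    assume "\<not> (\<exists>a<r. pick U a \<noteq> pick V a)"
    then have "U = V" by (intro rs_eqI[OF U V]) auto
    then show False using c unfolding cov_def by simp
  qed
  then obtain a where a: "a < r" "pick U a \<noteq> pick V a" by blast
  have le: "\<forall>x\<in>{..<r}. pick U x \<le> pick V x" using c unfolding cov_def by auto
  have lt: "\<exists>x\<in>{..<r}. pick U x < pick V x" using a le by (metis lessThan_iff order_le_neq_trans)
  show ?thesis unfolding wt_def by (rule sum_strict_mono_ex1[OF _ le lt]) simp
qed

lemma cov_unit:
  assumes U: "U \<in> rsubsets n r" and V: "V \<in> rsubsets n r" and c: "cov r U V"
    and w: "wt r V = Suc (wt r U)"
  shows "\<exists>a<r. \<forall>b<r. pick V b = pick U b + (if b = a then 1 else 0)"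
proof -
  define \<delta> where "\<delta> b = pick V b - pick U b" for b
  have pv: "pick V b = pick U b + \<delta> b" if "b < r" for b using c that unfolding cov_def \<delta>_def by auto
  have d1: "\<delta> b \<le> 1" if "b < r" for b using c that unfolding cov_def \<delta>_def by auto
  have "wt r V = wt r U + (\<Sum>b<r. \<delta> b)" unfolding wt_def using pv by (simp add: sum.distrib)
  then have s: "(\<Sum>b<r. \<delta> b) = 1" using w by simp
  then obtain a where a: "a < r" "\<delta> a \<noteq> 0" by (metis lessThan_iff sum.neutral zero_neq_one)
  then have da: "\<delta> a = 1" using d1 by fastforce
  have "(\<Sum>b<r. \<delta> b) = \<delta> a + (\<Sum>b\<in>{..<r} - {a}. \<delta> b)" by (rule sum.remove) (use a in auto)
  then have "(\<Sum>b\<in>{..<r} - {a}. \<delta> b) = 0" using s da by simp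
  then have z: "\<delta> b = 0" if "b < r" "b \<noteq> a" for b using that by simp
  show ?thesis using a pv z da by (intro exI[of _ a]) auto
qed

lemma rs_pick_ge: assumes U: "U \<in> rsubsets n r" shows "b < r \<Longrightarrow> b \<le> pick U b"
proof (induction b)
  case 0 then show ?case by simp
next
  case (Suc b)
  then have "pick U b < pick U (Suc b)" using rs_pick_mono[OF U, of b "Suc b"] by simp
  then show ?case using Suc by simp
qed

lemma mono_consec:
  assumes "\<And>b. Suc b < r \<Longrightarrow> f b \<le> (f (Suc b) :: nat)"
  shows "b \<le> c \<Longrightarrow> c < r \<Longrightarrow> f b \<le> f c"
proof (induction c)
  case 0 then show ?case by simp
next
  case (Suc c)
  show ?case
  proof (cases "b = Suc c")
    case True then show ?thesis by simp
  next
    case False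
    then have "b \<le> c" using Suc by simp
    then show ?thesis using Suc assms[of c] by simp
  qed
qed

definition cfg :: "nat \<Rightarrow> (nat \<Rightarrow> nat) \<Rightarrow> nat set" where
  "cfg r d = (\<lambda>a. a + d a) ` {0..<r}"

lemma cfg_pick:
  assumes m: "\<And>b c. b \<le> c \<Longrightarrow> c < r \<Longrightarrow> d b \<le> d c" and a: "a < r"
  shows "pick (cfg r d) a = a + d a"
  unfolding cfg_def
proof (rule pick_strict_image[OF _ a])
  fix x y :: nat assume xy: "x < y" "y < r"
  then have "d x \<le> d y" using m[of x y] by simp
  then show "x + d x < y + d y" using xy by simp
qed

lemma cfg_rs:
  assumes m: "\<And>b c. b \<le> c \<Longrightarrow> c < r \<Longrightarrow> d b \<le> d c" and bnd: "\<And>a. a < r \<Longrightarrow> a + d a < n"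
  shows "cfg r d \<in> rsubsets n r"
proof -
  have inj: "inj_on (\<lambda>a. a + d a) {0..<r}"
  proof (rule inj_onI)
    fix x y assume xy: "x \<in> {0..<r}" "y \<in> {0..<r}" "x + d x = y + d y"
    show "x = y"
    proof (rule ccontr)
      assume "x \<noteq> y"
      then consider "x < y" | "y < x" by linarith
      then show False
      proof cases
        case 1 then show False using m[of x y] xy by simp
      next
        case 2 then show False using m[of y x] xy by simp
      qed
    qed
  qed
  show ?thesis unfolding rsubsets_def cfg_def using bnd card_image[OF inj] by auto
qed

lemma rs_cfg: assumes U: "U \<in> rsubsets n r" shows "U = cfg r (\<lambda>b. pick U b - b)"
proof -
  have "cfg r (\<lambda>b. pick U b - b) = pick U ` {0..<r}"
    unfolding cfg_def by (rule image_cong) (use rs_pick_ge[OF U] in auto)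
  then show ?thesis using rs_pick_image[OF U] by simp
qed

fun bal :: "nat \<Rightarrow> nat \<Rightarrow> nat" where
  "bal 0 b = (if b = 0 then 1 else 0)"
| "bal (Suc a) 0 = bal a 0"
| "bal (Suc a) (Suc b) = (if b \<le> a then bal (Suc a) b + bal a (Suc b) else 0)"

lemma bal_zero: "a < b \<Longrightarrow> bal a b = 0"
  by (cases a; cases b) auto

lemma bal_rec: "b \<le> a \<Longrightarrow> 0 < a \<Longrightarrow> bal a b = (if 0 < b then bal a (b - 1) else 0) + bal (a - 1) b"
  by (cases a; cases b) auto

lemma bal_refl: "b \<le> Suc a \<Longrightarrow> bal a b + (if b = 0 then 0 else (a + b) choose (b - 1)) = (a + b) choose b"
proof (induction a b rule: bal.induct)
  case (1 b)
  then show ?case by (cases b) auto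
next
  case (2 a)
  then show ?case by (cases a) auto
next
  case (3 a b)
  show ?case
  proof (cases "b \<le> a")
    case True
    define N where "N = a + b + 1"
    have e1: "Suc a + b = N" "a + Suc b = N" "Suc a + Suc b = Suc N" "Suc b - 1 = b"
      unfolding N_def by simp_all
    have IH1: "bal (Suc a) b + (if b = 0 then 0 else N choose (b - 1)) = N choose b"
      using 3(1)[OF True] True unfolding e1(1) by simp
    have IH2: "bal a (Suc b) + (N choose b) = N choose Suc b"
      using 3(2)[OF True] True unfolding e1(2) by simp
    have pascal: "Suc N choose Suc b = (N choose b) + (N choose Suc b)" by simp
    have p2: "Suc N choose b = (if b = 0 then 0 else N choose (b - 1)) + (N choose b)"
      by (cases b) simp_all
    have be: "bal (Suc a) (Suc b) = bal (Suc a) b + bal a (Suc b)" using True by simp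
    have "bal (Suc a) (Suc b) + (Suc N choose b) = Suc N choose Suc b"
      using be IH1 IH2 pascal p2 by linarith
    then show ?thesis unfolding e1(3) by simp
  next
    case False
    then have b: "b = Suc a" using 3(3) by simp
    have "(Suc a + Suc b) choose b = (Suc a + Suc b) choose Suc b"
      using binomial_symmetric[of "Suc b" "Suc a + Suc b"] b by simp
    then show ?thesis using False by simp
  qed
qed

lemma choose_pm1:
  assumes p: "prime l" and c: "CHAR('a::comm_ring_1) = l"
  shows "j \<le> l - 1 \<Longrightarrow> (of_nat ((l - 1) choose j) :: 'a) = (-1) ^ j"
proof (induction j)
  case 0 then show ?case by simp
next
  case (Suc j)
  have l2: "2 \<le> l" using p prime_ge_2_nat by blast
  have "l dvd (l choose Suc j)"
    by (rule dvd_choose_prime) (use Suc.prems l2 p in auto)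
  then have z: "(of_nat (l choose Suc j) :: 'a) = 0" using c by (simp add: of_nat_eq_0_iff_char_dvd)
  have "(l choose Suc j) = ((l - 1) choose j) + ((l - 1) choose Suc j)"
    using l2 binomial_Suc_Suc[of "l - 1" j] by simp
  then have "(of_nat ((l - 1) choose Suc j) :: 'a) = - of_nat ((l - 1) choose j)"
    using z by (simp add: eq_neg_iff_add_eq_0 add.commute)
  then show ?case using Suc by simp
qed

lemma bal_nonzero:
  assumes p: "prime l" and c: "CHAR('a::field) = l" and l5: "5 \<le> l" and k: "2 * k = l - 1"
  shows "(of_nat (bal k k) :: 'a) \<noteq> 0"
proof -
  have k1: "1 \<le> k" using k l5 by simp
  have "bal k k + ((k + k) choose (k - 1)) = (k + k) choose k" using bal_refl[of k k] k1 by simp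
  then have h: "bal k k + ((l - 1) choose (k - 1)) = (l - 1) choose k" using k by (simp add: mult_2)
  have "(of_nat (bal k k) :: 'a) + of_nat ((l - 1) choose (k - 1)) = of_nat ((l - 1) choose k)"
    using arg_cong[OF h, of "of_nat :: nat \<Rightarrow> 'a"] by simp
  then have "(of_nat (bal k k) :: 'a) = of_nat ((l - 1) choose k) - of_nat ((l - 1) choose (k - 1))"
    by (simp add: eq_diff_eq)
  also have "\<dots> = (-1) ^ k - (-1) ^ (k - 1)"
    using choose_pm1[OF p c, of k] choose_pm1[OF p c, of "k - 1"] k by simp
  also have "\<dots> = (-1) ^ (k - 1) * (- 2)"
  proof -
    obtain k' where kk: "k = Suc k'" using k1 by (cases k) auto
    have "(-1::'a) ^ k = (-1) ^ (k - 1) * (-1)" unfolding kk by simp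
    then show ?thesis by (simp add: algebra_simps)
  qed
  finally have e: "(of_nat (bal k k) :: 'a) = (-1) ^ (k - 1) * (- 2)" .
  have "(2::'a) \<noteq> 0"
  proof
    assume "(2::'a) = 0"
    then have "(of_nat 2 :: 'a) = 0" by simp
    then have "l dvd 2" using c by (simp only: of_nat_eq_0_iff_char_dvd)
    then show False using l5 by (simp add: nat_dvd_not_less)
  qed
  then show ?thesis unfolding e by simp
qed

locale fam =
  fixes n r k :: nat and D :: "nat \<Rightarrow> nat \<Rightarrow> nat \<Rightarrow> nat"
  assumes fmono: "\<And>p q b c. q \<le> p \<Longrightarrow> p \<le> k \<Longrightarrow> b \<le> c \<Longrightarrow> c < r \<Longrightarrow> D p q b \<le> D p q c"
  and fbnd: "\<And>p q a. q \<le> p \<Longrightarrow> p \<le> k \<Longrightarrow> a < r \<Longrightarrow> a + D p q a < n"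
  and fsum: "\<And>p q. q \<le> p \<Longrightarrow> p \<le> k \<Longrightarrow> (\<Sum>a<r. D p q a) = p + q"
  and fstepP: "\<And>p q a. q \<le> p \<Longrightarrow> p < k \<Longrightarrow> a < r \<Longrightarrow>
                  D p q a \<le> D (Suc p) q a \<and> D (Suc p) q a \<le> Suc (D p q a)"
  and fstepQ: "\<And>p q a. q < p \<Longrightarrow> p \<le> k \<Longrightarrow> a < r \<Longrightarrow>
                  D p q a \<le> D p (Suc q) a \<and> D p (Suc q) a \<le> Suc (D p q a)"
  and fback: "\<And>p q a. q \<le> p \<Longrightarrow> p \<le> k \<Longrightarrow> a < r \<Longrightarrow> 1 \<le> D p q a \<Longrightarrow>
     (\<And>b c. b \<le> c \<Longrightarrow> c < r \<Longrightarrow> D p q b - (if b = a then 1 else 0) \<le> D p q c - (if c = a then 1 else 0)) \<Longrightarrow>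
     (0 < q \<and> (\<forall>b<r. D p q b - (if b = a then 1 else 0) = D p (q - 1) b)) \<or>
     (q < p \<and> (\<forall>b<r. D p q b - (if b = a then 1 else 0) = D (p - 1) q b))"
  and finj: "\<And>p q p' q'. q \<le> p \<Longrightarrow> p \<le> k \<Longrightarrow> q' \<le> p' \<Longrightarrow> p' \<le> k \<Longrightarrow>
     (\<forall>a<r. D p q a = D p' q' a) \<Longrightarrow> p = p' \<and> q = q'"
begin

definition C where "C p q = cfg r (D p q)"

lemma C_rs: "q \<le> p \<Longrightarrow> p \<le> k \<Longrightarrow> C p q \<in> rsubsets n r"
  unfolding C_def by (rule cfg_rs) (use fmono fbnd in auto)

lemma C_pick: "q \<le> p \<Longrightarrow> p \<le> k \<Longrightarrow> a < r \<Longrightarrow> pick (C p q) a = a + D p q a"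
  unfolding C_def by (rule cfg_pick) (use fmono in auto)

lemma C_wt: assumes "q \<le> p" "p \<le> k" shows "wt r (C p q) = (\<Sum>a<r. a) + (p + q)"
proof -
  have "wt r (C p q) = (\<Sum>a<r. a + D p q a)" unfolding wt_def
    by (rule sum.cong[OF refl]) (use C_pick[OF assms] in auto)
  then show ?thesis using fsum[OF assms] by (simp add: sum.distrib)
qed

lemma C_inj: assumes "q \<le> p" "p \<le> k" "q' \<le> p'" "p' \<le> k" "C p q = C p' q'"
  shows "p = p' \<and> q = q'"
proof (rule finj[OF assms(1-4)], intro allI impI)
  fix a assume "a < r"
  then have "pick (C p q) a = pick (C p' q') a" using assms(5) by simp
  then show "D p q a = D p' q' a" using C_pick[OF assms(1,2) \<open>a < r\<close>] C_pick[OF assms(3,4) \<open>a < r\<close>] by simp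
qed

lemma key:
  assumes U: "U \<in> rsubsets n r" and st: "q \<le> p" "p \<le> k"
    and cv: "cov r U (C p q)" and w: "wt r (C p q) = Suc (wt r U)"
  shows "(0 < q \<and> U = C p (q - 1)) \<or> (q < p \<and> U = C (p - 1) q)"
proof -
  have V: "C p q \<in> rsubsets n r" using C_rs[OF st] .
  obtain a where a: "a < r" "\<forall>b<r. pick (C p q) b = pick U b + (if b = a then 1 else 0)"
    using cov_unit[OF U V cv w] by blast
  define D' where "D' b = D p q b - (if b = a then 1 else 0)" for b
  have e: "pick U b + (if b = a then 1 else 0) = b + D p q b" if "b < r" for b
    using a(2) C_pick[OF st that] that by simp
  have pU: "pick U b = b + D' b" if "b < r" for b
    using e[OF that] rs_pick_ge[OF U that] unfolding D'_def by (cases "b = a") auto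
  have Da: "1 \<le> D p q a" using e[OF a(1)] rs_pick_ge[OF U a(1)] by simp
  have mono': "D' b \<le> D' c" if "b \<le> c" "c < r" for b c
  proof (rule mono_consec[of r D' b c, OF _ that])
    fix b assume b: "Suc b < r"
    have "pick U b < pick U (Suc b)" using rs_pick_mono[OF U _ b] by simp
    then show "D' b \<le> D' (Suc b)" using pU[of b] pU[of "Suc b"] b by simp
  qed
  have Ucfg: "U = cfg r D'"
  proof -
    have "cfg r D' = pick U ` {0..<r}" unfolding cfg_def by (rule image_cong) (use pU in auto)
    then show ?thesis using rs_pick_image[OF U] by simp
  qed
  have "(0 < q \<and> (\<forall>b<r. D' b = D p (q - 1) b)) \<or> (q < p \<and> (\<forall>b<r. D' b = D (p - 1) q b))"
    using fback[OF st a(1) Da] mono' unfolding D'_def by blast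
  then show ?thesis
  proof
    assume h: "0 < q \<and> (\<forall>b<r. D' b = D p (q - 1) b)"
    have "cfg r D' = C p (q - 1)" unfolding C_def cfg_def by (rule image_cong) (use h in auto)
    then show ?thesis using h Ucfg by simp
  next
    assume h: "q < p \<and> (\<forall>b<r. D' b = D (p - 1) q b)"
    have "cfg r D' = C (p - 1) q" unfolding C_def cfg_def by (rule image_cong) (use h in auto)
    then show ?thesis using h Ucfg by simp
  qed
qed

lemma count:
  "((ext_pow_op_minus_one r (jordan_block n (1::'a::comm_ring_1))) ^^ (2 * k))
      (\<lambda>T. if T = C k k then 1 else 0) (C 0 0) = of_nat (bal k k)"
proof -
  define M where "M = ext_pow_op_minus_one r (jordan_block n (1::'a))"
  define e where "e = (\<lambda>T. if T = C k k then (1::'a) else 0)"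
  define G where "G j = (M ^^ j) e" for j
  define R where "R = rsubsets n r"
  define c0 where "c0 = (\<Sum>a<r. a)"
  have wC: "wt r (C p q) = c0 + (p + q)" if "q \<le> p" "p \<le> k" for p q
    using C_wt[OF that] unfolding c0_def .
  have wS: "wt r (C k k) = c0 + 2 * k" using wC[of k k] by simp
  have CR: "C p q \<in> R" if "q \<le> p" "p \<le> k" for p q using C_rs[OF that] unfolding R_def .
  have GS: "G (Suc j) = M (G j)" for j by (simp add: G_def)
  have Mval: "M v U = (\<Sum>V\<in>{V\<in>R. cov r U V}. v V)" if "U \<in> R" for U v
    unfolding M_def R_def by (rule MJ_eq) (use that in \<open>simp add: R_def\<close>)
  have Mout: "M v U = 0" if "U \<notin> R" for U v
    using supp_extm[of "jordan_block n (1::'a)" n r v] that unfolding M_def R_def supp_def by simp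
  have finR: "finite R" unfolding R_def by (rule finite_rsubsets)
  have van: "G j U = 0" if "wt r (C k k) < wt r U + j" for j U
    using that
  proof (induction j arbitrary: U)
    case 0
    then have "U \<noteq> C k k" by auto
    then show ?case by (simp add: G_def e_def)
  next
    case (Suc j)
    show ?case
    proof (cases "U \<in> R")
      case False then show ?thesis using Mout GS by simp
    next
      case True
      have "G (Suc j) U = (\<Sum>V\<in>{V\<in>R. cov r U V}. G j V)" using Mval[OF True] GS by simp
      also have "\<dots> = 0"
      proof (rule sum.neutral, intro ballI)
        fix V assume V: "V \<in> {V\<in>R. cov r U V}"
        then have "wt r U < wt r V" using cov_wt[of U n r V] True unfolding R_def by auto
        then show "G j V = 0" using Suc by simp
      qed
      finally show ?thesis .
    qed
  qed
  have main: "\<forall>U. U \<in> R \<longrightarrow> wt r U + j = wt r (C k k) \<longrightarrow>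
      (\<forall>p q. q \<le> p \<longrightarrow> p \<le> k \<longrightarrow> U = C p q \<longrightarrow> G j U = of_nat (bal (k - q) (k - p))) \<and>
      ((\<forall>p q. q \<le> p \<longrightarrow> p \<le> k \<longrightarrow> U \<noteq> C p q) \<longrightarrow> G j U = 0)" for j
  proof (induction j)
    case 0
    show ?case
    proof (intro allI impI conjI)
      fix U p q assume U: "U \<in> R" and w: "wt r U + 0 = wt r (C k k)" and st: "q \<le> p" "p \<le> k" and Ueq: "U = C p q"
      have "p + q = 2 * k" using w wC[OF st] wS Ueq by simp
      then have "p = k" "q = k" using st by auto
      then show "G 0 U = of_nat (bal (k - q) (k - p))" using Ueq by (simp add: G_def e_def)
    next
      fix U assume U: "U \<in> R" and w: "wt r U + 0 = wt r (C k k)"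
        and nf: "\<forall>p q. q \<le> p \<longrightarrow> p \<le> k \<longrightarrow> U \<noteq> C p q"
      then have "U \<noteq> C k k" by auto
      then show "G 0 U = 0" by (simp add: G_def e_def)
    qed
  next
    case (Suc j)
    show ?case
    proof (intro allI impI)
      fix U assume U: "U \<in> R" and w: "wt r U + Suc j = wt r (C k k)"
      define Z where "Z = {V\<in>R. cov r U V \<and> wt r V = Suc (wt r U)}"
      have finZ: "finite Z" unfolding Z_def using finR by simp
      have GZ: "G (Suc j) U = (\<Sum>V\<in>Z. G j V)"
      proof -
        have "G (Suc j) U = (\<Sum>V\<in>{V\<in>R. cov r U V}. G j V)" using Mval[OF U] GS by simp
        also have "\<dots> = (\<Sum>V\<in>Z. G j V)"
        proof (rule sum.mono_neutral_right)
          show "finite {V\<in>R. cov r U V}" using finR by simp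
          show "Z \<subseteq> {V\<in>R. cov r U V}" unfolding Z_def by auto
          show "\<forall>V\<in>{V\<in>R. cov r U V} - Z. G j V = 0"
          proof
            fix V assume V: "V \<in> {V\<in>R. cov r U V} - Z"
            then have "wt r U < wt r V" using cov_wt[of U n r V] U unfolding R_def by auto
            then have "Suc (wt r U) < wt r V" using V unfolding Z_def by auto
            then show "G j V = 0" using van w by simp
          qed
        qed
        finally show ?thesis .
      qed
      have IHV: "(\<forall>p q. q \<le> p \<longrightarrow> p \<le> k \<longrightarrow> V = C p q \<longrightarrow> G j V = of_nat (bal (k - q) (k - p))) \<and>
                 ((\<forall>p q. q \<le> p \<longrightarrow> p \<le> k \<longrightarrow> V \<noteq> C p q) \<longrightarrow> G j V = 0)" if V: "V \<in> Z" for V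
      proof -
        have "V \<in> R" "wt r V + j = wt r (C k k)" using V w unfolding Z_def by auto
        then show ?thesis using Suc.IH by blast
      qed
      have IHV1: "G j V = of_nat (bal (k - q) (k - p))" if "V \<in> Z" "q \<le> p" "p \<le> k" "V = C p q" for V p q
        using IHV[OF that(1)] that(2-4) by blast
      have IHV2: "G j V = 0" if "V \<in> Z" "\<And>p q. q \<le> p \<Longrightarrow> p \<le> k \<Longrightarrow> V \<noteq> C p q" for V
      proof -
        have "\<forall>p q. q \<le> p \<longrightarrow> p \<le> k \<longrightarrow> V \<noteq> C p q" using that(2) by blast
        then show ?thesis using IHV[OF that(1)] by blast
      qed
      have covZ: "cov r U V" "wt r V = Suc (wt r U)" if "V \<in> Z" for V using that unfolding Z_def by auto
      have UR: "U \<in> rsubsets n r" using U unfolding R_def .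
      show "(\<forall>p q. q \<le> p \<longrightarrow> p \<le> k \<longrightarrow> U = C p q \<longrightarrow> G (Suc j) U = of_nat (bal (k - q) (k - p))) \<and>
            ((\<forall>p q. q \<le> p \<longrightarrow> p \<le> k \<longrightarrow> U \<noteq> C p q) \<longrightarrow> G (Suc j) U = 0)"
      proof (intro conjI allI impI)
        assume nf: "\<forall>p q. q \<le> p \<longrightarrow> p \<le> k \<longrightarrow> U \<noteq> C p q"
        have "G j V = 0" if V: "V \<in> Z" for V
        proof (cases "\<exists>p q. q \<le> p \<and> p \<le> k \<and> V = C p q")
          case True
          then obtain p q where st: "q \<le> p" "p \<le> k" and Veq: "V = C p q" by blast
          have "(0 < q \<and> U = C p (q - 1)) \<or> (q < p \<and> U = C (p - 1) q)"
            by (rule key[OF UR st]) (use covZ[OF V] Veq in auto)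
          then show ?thesis
          proof
            assume h: "0 < q \<and> U = C p (q - 1)"
            have "q - 1 \<le> p \<longrightarrow> p \<le> k \<longrightarrow> U \<noteq> C p (q - 1)" using nf by blast
            then have "U \<noteq> C p (q - 1)" using st by simp
            then show ?thesis using h by simp
          next
            assume h: "q < p \<and> U = C (p - 1) q"
            have a1: "q \<le> p - 1" "p - 1 \<le> k" using st h by auto
            then have "U \<noteq> C (p - 1) q" using nf by blast
            then show ?thesis using h by simp
          qed
        next
          case False
          then show ?thesis by (intro IHV2[OF V]) blast
        qed
        then show "G (Suc j) U = 0" using GZ by simp
      next
        fix p q assume st: "q \<le> p" "p \<le> k" and Ueq: "U = C p q"
        have pq: "p + q + Suc j = 2 * k" using w wC[OF st] wS Ueq by simp
        define c1 where "c1 = (if p < k then of_nat (bal (k - q) (k - Suc p)) else (0::'a))"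
        define c2 where "c2 = (if q < p then of_nat (bal (k - Suc q) (k - p)) else (0::'a))"
        define V1 where "V1 = C (Suc p) q"
        define V2 where "V2 = C p (Suc q)"
        have V12: "V1 \<noteq> V2" if "p < k" "q < p"
        proof
          assume "V1 = V2"
          then have "Suc p = p" using C_inj[of q "Suc p" "Suc q" p] that unfolding V1_def V2_def by simp
          then show False by simp
        qed
        have pt: "G j V = (if V = V1 then c1 else 0) + (if V = V2 then c2 else 0)" if V: "V \<in> Z" for V
        proof (cases "\<exists>p' q'. q' \<le> p' \<and> p' \<le> k \<and> V = C p' q'")
          case True
          then obtain p' q' where st': "q' \<le> p'" "p' \<le> k" and Veq: "V = C p' q'" by blast
          have GV: "G j V = of_nat (bal (k - q') (k - p'))" by (rule IHV1[OF V st' Veq])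
          have "(0 < q' \<and> U = C p' (q' - 1)) \<or> (q' < p' \<and> U = C (p' - 1) q')"
            by (rule key[OF UR st']) (use covZ[OF V] Veq in auto)
          then show ?thesis
          proof
            assume h: "0 < q' \<and> U = C p' (q' - 1)"
            then have "p = p' \<and> q = q' - 1" using C_inj[of q p "q' - 1" p'] st st' h Ueq by simp
            then have pp: "p' = p" "q' = Suc q" using h by auto
            then have qp: "q < p" using st' by simp
            have VV2: "V = V2" unfolding V2_def Veq pp ..
            have "(if V = V1 then c1 else 0) = 0"
            proof (cases "p < k")
              case True then have "V \<noteq> V1" using V12 qp VV2 by simp
              then show ?thesis by simp
            next
              case False then show ?thesis unfolding c1_def by simp
            qed
            moreover have "G j V = c2" unfolding GV c2_def pp using qp by simp
            ultimately show ?thesis using VV2 by simp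
          next
            assume h: "q' < p' \<and> U = C (p' - 1) q'"
            have a1: "q' \<le> p' - 1" "p' - 1 \<le> k" using h st' by auto
            have "p = p' - 1 \<and> q = q'" by (rule C_inj[OF st a1]) (use h Ueq in simp)
            then have pp: "p' = Suc p" "q' = q" using h by auto
            then have pk: "p < k" using st' by simp
            have VV1: "V = V1" unfolding V1_def Veq pp ..
            have "(if V = V2 then c2 else 0) = 0"
            proof (cases "q < p")
              case True then have "V \<noteq> V2" using V12 pk VV1 by simp
              then show ?thesis by simp
            next
              case False then show ?thesis unfolding c2_def by simp
            qed
            moreover have "G j V = c1" unfolding GV c1_def pp using pk by simp
            ultimately show ?thesis using VV1 by simp
          qed
        next
          case False
          then have G0: "G j V = 0" by (intro IHV2[OF V]) blast
          have "(if V = V1 then c1 else 0) = 0"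
          proof (cases "p < k")
            case True
            have "V \<noteq> C (Suc p) q"
            proof
              assume "V = C (Suc p) q"
              then have "\<exists>p' q'. q' \<le> p' \<and> p' \<le> k \<and> V = C p' q'"
                using st True by (intro exI[of _ "Suc p"] exI[of _ q]) auto
              then show False using False by simp
            qed
            then show ?thesis unfolding V1_def by simp
          next
            case False then show ?thesis unfolding c1_def by simp
          qed
          moreover have "(if V = V2 then c2 else 0) = 0"
          proof (cases "q < p")
            case True
            have "V \<noteq> C p (Suc q)"
            proof
              assume "V = C p (Suc q)"
              then have "\<exists>p' q'. q' \<le> p' \<and> p' \<le> k \<and> V = C p' q'"
                using st True by (intro exI[of _ p] exI[of _ "Suc q"]) auto
              then show False using False by simp
            qed
            then show ?thesis unfolding V2_def by simp
          next
            case False then show ?thesis unfolding c2_def by simp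
          qed
          ultimately show ?thesis using G0 by simp
        qed
        have V1Z: "V1 \<in> Z" if pk: "p < k"
        proof -
          have st1: "q \<le> Suc p" "Suc p \<le> k" using st pk by auto
          have ne: "U \<noteq> V1"
          proof
            assume "U = V1"
            then have "p = Suc p" using C_inj[OF st st1] Ueq unfolding V1_def by simp
            then show False by simp
          qed
          have "cov r U V1" unfolding cov_def
          proof (intro conjI allI impI ne)
            fix a assume a: "a < r"
            show "pick U a \<le> pick V1 a" "pick V1 a \<le> Suc (pick U a)"
              using fstepP[OF st(1) pk a] C_pick[OF st a] C_pick[OF st1 a] Ueq unfolding V1_def by auto
          qed
          moreover have "wt r V1 = Suc (wt r U)" using wC[OF st] wC[OF st1] Ueq unfolding V1_def by simp
          ultimately show ?thesis unfolding Z_def using CR[OF st1] unfolding V1_def by simp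
        qed
        have V2Z: "V2 \<in> Z" if qp: "q < p"
        proof -
          have st2: "Suc q \<le> p" "p \<le> k" using st qp by auto
          have ne: "U \<noteq> V2"
          proof
            assume "U = V2"
            then have "q = Suc q" using C_inj[OF st st2] Ueq unfolding V2_def by simp
            then show False by simp
          qed
          have "cov r U V2" unfolding cov_def
          proof (intro conjI allI impI ne)
            fix a assume a: "a < r"
            show "pick U a \<le> pick V2 a" "pick V2 a \<le> Suc (pick U a)"
              using fstepQ[OF qp st(2) a] C_pick[OF st a] C_pick[OF st2 a] Ueq unfolding V2_def by auto
          qed
          moreover have "wt r V2 = Suc (wt r U)" using wC[OF st] wC[OF st2] Ueq unfolding V2_def by simp
          ultimately show ?thesis unfolding Z_def using CR[OF st2] unfolding V2_def by simp
        qed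
        have "G (Suc j) U = (\<Sum>V\<in>Z. (if V = V1 then c1 else 0) + (if V = V2 then c2 else 0))"
          unfolding GZ by (rule sum.cong[OF refl]) (rule pt)
        also have "\<dots> = (\<Sum>V\<in>Z. if V = V1 then c1 else 0) + (\<Sum>V\<in>Z. if V = V2 then c2 else 0)"
          by (rule sum.distrib)
        also have "\<dots> = (if V1 \<in> Z then c1 else 0) + (if V2 \<in> Z then c2 else 0)"
          using sum.delta[OF finZ, of V1 "\<lambda>_. c1"] sum.delta[OF finZ, of V2 "\<lambda>_. c2"] by simp
        also have "\<dots> = c1 + c2"
        proof -
          have "(if V1 \<in> Z then c1 else 0) = c1"
          proof (cases "p < k")
            case True then show ?thesis using V1Z by simp
          next
            case False then show ?thesis unfolding c1_def by simp
          qed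
          moreover have "(if V2 \<in> Z then c2 else 0) = c2"
          proof (cases "q < p")
            case True then show ?thesis using V2Z by simp
          next
            case False then show ?thesis unfolding c2_def by simp
          qed
          ultimately show ?thesis by simp
        qed
        also have "\<dots> = of_nat (bal (k - q) (k - p))"
        proof -
          have qk: "q < k" using pq st by linarith
          have br: "bal (k - q) (k - p) = (if 0 < k - p then bal (k - q) (k - p - 1) else 0) + bal (k - q - 1) (k - p)"
            by (rule bal_rec) (use st qk in auto)
          have b2: "bal (k - q - 1) (k - p) = (if q < p then bal (k - Suc q) (k - p) else 0)"
          proof (cases "q < p")
            case True then show ?thesis by simp
          next
            case False then have "q = p" using st by simp
            then show ?thesis using bal_zero[of "k - q - 1" "k - p"] qk by simp
          qed
          have "bal (k - q) (k - p) = (if p < k then bal (k - q) (k - Suc p) else 0) + (if q < p then bal (k - Suc q) (k - p) else 0)"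
            unfolding br b2 by simp
          then show ?thesis unfolding c1_def c2_def by simp
        qed
        finally show "G (Suc j) U = of_nat (bal (k - q) (k - p))" .
      qed
    qed
  qed
  have "G (2 * k) (C 0 0) = of_nat (bal (k - 0) (k - 0))"
    using main[of "2 * k"] CR[of 0 0] wC[of 0 0] wS by simp
  then show ?thesis unfolding G_def M_def e_def by simp
qed

end

definition DA :: "nat \<Rightarrow> nat \<Rightarrow> nat \<Rightarrow> nat \<Rightarrow> nat" where
  "DA r p q a = (if a = r - 1 then p else if a = r - 2 then q else 0)"

lemma famA:
  assumes r2: "2 \<le> r" and rk: "r \<le> k" and n: "n = 2 * k"
  shows "fam n r k (DA r)"
proof
  fix p q b c assume "q \<le> p" "p \<le> k" "b \<le> c" "c < r"
  then show "DA r p q b \<le> DA r p q c" unfolding DA_def by auto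
next
  fix p q a assume "q \<le> p" "p \<le> k" "a < r"
  then show "a + DA r p q a < n" unfolding DA_def using r2 rk n by auto
next
  fix p q :: nat assume "q \<le> p" "p \<le> k"
  obtain m where m: "r = Suc (Suc m)" using r2 by (metis add_2_eq_Suc le_Suc_ex)
  have z: "(\<Sum>a<m. DA r p q a) = 0" unfolding DA_def m by simp
  show "(\<Sum>a<r. DA r p q a) = p + q" unfolding m using z by (simp add: DA_def m)
next
  fix p q a assume "q \<le> p" "p < k" "a < r"
  then show "DA r p q a \<le> DA r (Suc p) q a \<and> DA r (Suc p) q a \<le> Suc (DA r p q a)"
    unfolding DA_def by auto
next
  fix p q a assume "q < p" "p \<le> k" "a < r"
  then show "DA r p q a \<le> DA r p (Suc q) a \<and> DA r p (Suc q) a \<le> Suc (DA r p q a)"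
    unfolding DA_def by auto
next
  fix p q a
  assume st: "q \<le> p" "p \<le> k" and a: "a < r" and Da: "1 \<le> DA r p q a"
    and m: "\<And>b c. b \<le> c \<Longrightarrow> c < r \<Longrightarrow> DA r p q b - (if b = a then 1 else 0) \<le> DA r p q c - (if c = a then 1 else 0)"
  have ne: "r - 1 \<noteq> r - 2" using r2 by simp
  have aa: "a = r - 1 \<or> a = r - 2" using Da unfolding DA_def by (auto split: if_splits)
  show "(0 < q \<and> (\<forall>b<r. DA r p q b - (if b = a then 1 else 0) = DA r p (q - 1) b)) \<or>
        (q < p \<and> (\<forall>b<r. DA r p q b - (if b = a then 1 else 0) = DA r (p - 1) q b))"
  proof (cases "a = r - 2")
    case True
    then have "0 < q" using Da ne unfolding DA_def by auto
    moreover have "\<forall>b<r. DA r p q b - (if b = a then 1 else 0) = DA r p (q - 1) b"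
      using True ne unfolding DA_def by auto
    ultimately show ?thesis by blast
  next
    case False
    then have a1: "a = r - 1" using aa by simp
    then have p1: "1 \<le> p" using Da unfolding DA_def by simp
    have "DA r p q (r - 2) - (if r - 2 = a then 1 else 0) \<le> DA r p q (r - 1) - (if r - 1 = a then 1 else 0)"
      using m[of "r - 2" "r - 1"] r2 by simp
    then have "q \<le> p - 1" using a1 ne unfolding DA_def by simp
    then have "q < p" using p1 by simp
    moreover have "\<forall>b<r. DA r p q b - (if b = a then 1 else 0) = DA r (p - 1) q b"
      using a1 ne unfolding DA_def by auto
    ultimately show ?thesis by blast
  qed
next
  fix p q p' q' assume "\<forall>a<r. DA r p q a = DA r p' q' a"
  then have "DA r p q (r - 1) = DA r p' q' (r - 1)" "DA r p q (r - 2) = DA r p' q' (r - 2)" using r2 by auto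
  moreover have ne: "r - 2 \<noteq> r - Suc 0" using r2 by arith
  ultimately show "p = p' \<and> q = q'" unfolding DA_def using r2 by auto
qed

definition DB :: "nat \<Rightarrow> nat \<Rightarrow> nat \<Rightarrow> nat \<Rightarrow> nat" where
  "DB r p q a = (if r - p \<le> a then 1 else 0) + (if r - q \<le> a then 1 else 0)"

lemma sum_ind_tail: "p \<le> r \<Longrightarrow> (\<Sum>a<r. (if r - p \<le> a then 1 else 0 :: nat)) = p"
proof -
  assume p: "p \<le> r"
  have "(\<Sum>a<r. (if r - p \<le> a then 1 else 0 :: nat)) = (\<Sum>a\<in>{a\<in>{..<r}. r - p \<le> a}. 1)"
    by (rule sum.inter_filter[symmetric]) simp
  also have "{a\<in>{..<r}. r - p \<le> a} = {r - p..<r}" by auto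
  finally show ?thesis using p by simp
qed

lemma famB:
  assumes kr: "k \<le> r" and rn: "r + 2 \<le> n"
  shows "fam n r k (DB r)"
proof
  fix p q b c assume "q \<le> p" "p \<le> k" "b \<le> c" "c < r"
  then show "DB r p q b \<le> DB r p q c" unfolding DB_def by auto
next
  fix p q a assume "q \<le> p" "p \<le> k" "a < r"
  then show "a + DB r p q a < n" unfolding DB_def using rn by auto
next
  fix p q :: nat assume "q \<le> p" "p \<le> k"
  then have "p \<le> r" "q \<le> r" using kr by auto
  then show "(\<Sum>a<r. DB r p q a) = p + q" unfolding DB_def by (simp add: sum.distrib sum_ind_tail)
next
  fix p q a assume "q \<le> p" "p < k" "a < r"
  then show "DB r p q a \<le> DB r (Suc p) q a \<and> DB r (Suc p) q a \<le> Suc (DB r p q a)"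
    unfolding DB_def using kr by auto
next
  fix p q a assume "q < p" "p \<le> k" "a < r"
  then show "DB r p q a \<le> DB r p (Suc q) a \<and> DB r p (Suc q) a \<le> Suc (DB r p q a)"
    unfolding DB_def using kr by auto
next
  fix p q a
  assume st: "q \<le> p" "p \<le> k" and a: "a < r" and Da: "1 \<le> DB r p q a"
    and m: "\<And>b c. b \<le> c \<Longrightarrow> c < r \<Longrightarrow> DB r p q b - (if b = a then 1 else 0) \<le> DB r p q c - (if c = a then 1 else 0)"
  have pr: "p \<le> r" "q \<le> r" using st kr by auto
  have ap: "r - p \<le> a" using Da st unfolding DB_def by (auto split: if_splits)
  show "(0 < q \<and> (\<forall>b<r. DB r p q b - (if b = a then 1 else 0) = DB r p (q - 1) b)) \<or>
        (q < p \<and> (\<forall>b<r. DB r p q b - (if b = a then 1 else 0) = DB r (p - 1) q b))"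
  proof (cases "a = r - q")
    case True
    then have q0: "0 < q" using a by auto
    have "\<forall>b<r. DB r p q b - (if b = a then 1 else 0) = DB r p (q - 1) b"
      using True q0 pr ap unfolding DB_def by auto
    then show ?thesis using q0 by blast
  next
    case False
    show ?thesis
    proof (cases "a = r - p")
      case True
      then have p0: "0 < p" using a by auto
      have qp: "q < p" using True False st by auto
      have "\<forall>b<r. DB r p q b - (if b = a then 1 else 0) = DB r (p - 1) q b"
        using True False p0 pr unfolding DB_def by auto
      then show ?thesis using qp by blast
    next
      case False2: False
      have a1: "1 \<le> a" "r - p \<le> a - 1" using ap False2 by auto
      have "DB r p q (a - 1) - (if a - 1 = a then 1 else 0) \<le> DB r p q a - (if a = a then 1 else 0)"
        using m[of "a - 1" a] a by simp
      then have False using a1 False unfolding DB_def by (auto split: if_splits)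
      then show ?thesis ..
    qed
  qed
next
  fix p q p' q' assume st: "q \<le> p" "p \<le> k" "q' \<le> p'" "p' \<le> k" and eq: "\<forall>a<r. DB r p q a = DB r p' q' a"
  have pr: "p \<le> r" "q \<le> r" "p' \<le> r" "q' \<le> r" using st kr by auto
  have pp: "p = p'"
  proof (rule ccontr)
    assume "p \<noteq> p'"
    then consider "p < p'" | "p' < p" by linarith
    then show False
    proof cases
      case 1
      then have "DB r p q (r - p') = DB r p' q' (r - p')" using eq pr by auto
      then show False using 1 st pr unfolding DB_def by (auto split: if_splits)
    next
      case 2
      then have "DB r p q (r - p) = DB r p' q' (r - p)" using eq pr by auto
      then show False using 2 st pr unfolding DB_def by (auto split: if_splits)
    qed
  qed
  have qq: "q = q'"
  proof (rule ccontr)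
    assume "q \<noteq> q'"
    then consider "q < q'" | "q' < q" by linarith
    then show False
    proof cases
      case 1
      then have "DB r p q (r - q') = DB r p' q' (r - q')" using eq pr by auto
      then show False using 1 st pr pp unfolding DB_def by (auto split: if_splits)
    next
      case 2
      then have "DB r p q (r - q) = DB r p' q' (r - q)" using eq pr by auto
      then show False using 2 st pr pp unfolding DB_def by (auto split: if_splits)
    qed
  qed
  show "p = p' \<and> q = q'" using pp qq by simp
qed

theorem lemma3p10:
  fixes A :: "'a :: field mat" and l r :: nat
  assumes "prime l" and "l \<ge> 5" and "CHAR('a) = l"
    and "A \<in> carrier_mat (l - 1) (l - 1)"
    and "similar_mat A (jordan_block (l - 1) 1)"
    and "2 \<le> r" and "r \<le> l - 3"
  shows "\<exists>v. (\<forall>S. S \<notin> rsubsets (l - 1) r \<longrightarrow> v S = 0) \<and>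
             (ext_pow_op_minus_one r A ^^ (l - 1)) v \<noteq> (\<lambda>_. 0)"
proof -
  note p = assms(1) and l5 = assms(2) and ch = assms(3) and Acar = assms(4) and sim = assms(5)
    and r2 = assms(6) and rl = assms(7)
  let ?n = "l - 1"
  have lodd: "odd l" using prime_odd_nat[OF p] l5 by simp
  define k where "k = (l - 1) div 2"
  obtain t where lt: "l = 2 * t + 1" using lodd by (rule oddE)
  have k2: "2 * k = l - 1" unfolding k_def lt by simp
  let ?J = "jordan_block ?n (1::'a)"
  have J: "?J \<in> carrier_mat ?n ?n" by (simp add: jordan_block_def)
  obtain D where fm: "fam ?n r k D"
  proof (cases "r \<le> k")
    case True
    show ?thesis by (rule that[OF famA[OF r2 True k2[symmetric]]])
  next
    case False
    have "r + 2 \<le> l - 1" using rl l5 by simp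
    then show ?thesis using False by (intro that[OF famB]) auto
  qed
  interpret fam "l - 1" r k D by (rule fm)
  define e where "e = (\<lambda>T. if T = C k k then (1::'a) else 0)"
  define w where "w = (ext_pow_op_minus_one r ?J ^^ (l - 1)) e"
  have w0: "w (C 0 0) = of_nat (bal k k)"
    using count[where 'a='a] unfolding w_def e_def k2 .
  have wne: "w \<noteq> (\<lambda>_. 0)" using bal_nonzero[OF p ch l5 k2] w0 by auto
  have esupp: "supp ?n r e" unfolding supp_def e_def using C_rs[of k k] by auto
  have wsupp: "supp ?n r w"
  proof -
    have m: "l - 1 = Suc (l - 2)" using l5 by simp
    have gen: "(f ^^ (l - 1)) x = f ((f ^^ (l - 2)) x)" for f :: "(nat set \<Rightarrow> 'a) \<Rightarrow> (nat set \<Rightarrow> 'a)" and x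
    proof -
      have "(f ^^ Suc (l - 2)) x = f ((f ^^ (l - 2)) x)" by simp
      then show ?thesis unfolding m[symmetric] .
    qed
    show ?thesis unfolding w_def gen using supp_extm[of ?J ?n r] J by simp
  qed
  obtain P Q where wit: "similar_mat_wit A ?J P Q" using sim unfolding similar_mat_def by blast
  have dA: "dim_row A = ?n" using Acar by simp
  have P: "P \<in> carrier_mat ?n ?n" and Q: "Q \<in> carrier_mat ?n ?n" and PQ: "P * Q = 1\<^sub>m ?n"
    and QP: "Q * P = 1\<^sub>m ?n" and Aeq: "A = P * ?J * Q"
    using wit unfolding similar_mat_wit_def Let_def dA by auto
  define v where "v = ext_pow_op r P e"
  show ?thesis
  proof (intro exI conjI)
    show "\<forall>S. S \<notin> rsubsets (l - 1) r \<longrightarrow> v S = 0"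
      using supp_ext[of P ?n r e] P unfolding supp_def v_def by auto
    have "(ext_pow_op_minus_one r A ^^ (l - 1)) v = ext_pow_op r P w"
      unfolding Aeq v_def w_def by (rule transfer_pow[OF P Q J PQ QP esupp])
    moreover have "ext_pow_op r P w \<noteq> (\<lambda>_. 0)"
    proof
      assume h: "ext_pow_op r P w = (\<lambda>_. 0)"
      have "ext_pow_op r Q (ext_pow_op r P w) = ext_pow_op r (Q * P) w"
        using ext_pow_op_mult[OF Q P] by simp
      also have "\<dots> = w"
      proof
        fix S show "ext_pow_op r (Q * P) w S = w S"
          unfolding QP ext_pow_op_one using wsupp unfolding supp_def by auto
      qed
      finally have "w = ext_pow_op r Q (\<lambda>_. 0)" using h by simp
      then have "w = (\<lambda>_. 0)" using ext_pow_op_zero by simp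
      then show False using wne by simp
    qed
    ultimately show "(ext_pow_op_minus_one r A ^^ (l - 1)) v \<noteq> (\<lambda>_. 0)" by simp
  qed
qed

end
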